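(* Let $V=\{0,1,2,3,4\}$ and $\mathcal{E}=\{(0,1),(1,2),(1,3),(2,4),(3,4)\}$. Let $A$ be the $|V|\times|\mathcal{E}|$ node–arc incidence matrix of the directed graph $(V,\mathcal{E})$ (for node $v$ and arc $e$, $A_{v,e}=1$ if $e$ leaves $v$, $A_{v,e}=-1$ if $e$ enters $v$, and $0$ otherwise), let $B$ be the $|\mathcal{E}|\times|V|$ matrix with $B_{(i,j),i}=1$ for each $(i,j)\in\mathcal{E}$ and all other entries $0$, let $I_{\mathcal{E}}$ and $I_V$ be identity matrices of dimensions $|\mathcal{E}|$ and $|V|$, and let $e_V^T$ be the $1\times|V|$ row vector of ones. Then the block matrix \[ C=\begin{pmatrix} A & 0 & 0\\ 0 & I_{\mathcal{E}} & -B\\ -I_{\mathcal{E}} & I_{\mathcal{E}} & 0\\ 0 & 0 & e_V^T\\ 0 & 0 & I_V\end{pmatrix}, \] whose three column blocks correspond to variables $\alpha\in\mathbb{R}^{\mathcal{E}}$, $w\in\mathbb{R}^{\mathcal{E}}$, $\delta\in\mathbb{R}^{V}$, is not totally unimodular.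
   Context: $C$ is the constraint matrix of the linearised adversarial sub-problem (a longest-path problem with up to $\Gamma$ units of delay) of the two-stage robust resource-constrained project scheduling problem, restricted to the arcs $\mathcal{E}$ of the extended project network: the row blocks correspond respectively to flow-conservation/source/sink constraints on $\alpha$, the constraints $w_{ij}\le\delta_i$, the constraints $w_{ij}\le\alpha_{ij}$, the budget constraint $\sum_i\delta_i\le\Gamma$, and the bounds $\delta_i\le1$. A matrix is totally unimodular if every square submatrix has determinant in $\{-1,0,1\}$. *)

theory Defs
  imports "Jordan_Normal_Form.DL_Submatrix" "Jordan_Normal_Form.Determinant"
begin

definition totally_unimodular :: "int mat \<Rightarrow> bool" where
  "totally_unimodular M \<longleftrightarrow>
     (\<forall>I J. I \<subseteq> {..<dim_row M} \<longrightarrow> J \<subseteq> {..<dim_col M} \<longrightarrow> card I = card J \<longrightarrow>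
        det (submatrix M I J) \<in> {-1, 0, 1})"

text \<open>Digraph on nodes {0..<n} with arc list E; arc e is E ! e = (tail, head).\<close>
definition incidence_mat :: "nat \<Rightarrow> (nat \<times> nat) list \<Rightarrow> int mat" where
  "incidence_mat n E = mat n (length E)
     (\<lambda>(v, e). if fst (E ! e) = v then 1 else if snd (E ! e) = v then -1 else 0)"

definition tail_mat :: "nat \<Rightarrow> (nat \<times> nat) list \<Rightarrow> int mat" where
  "tail_mat n E = mat (length E) n (\<lambda>(e, v). if fst (E ! e) = v then 1 else 0)"

text \<open>The block matrix C: columns are (alpha in R^E, w in R^E, delta in R^V);
  row blocks are [A 0 0; 0 I -B; -I I 0; 0 0 e^T; 0 0 I_V].\<close>
definition C_mat :: "nat \<Rightarrow> (nat \<times> nat) list \<Rightarrow> int mat" where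
  "C_mat n E = (let m = length E; A = incidence_mat n E; B = tail_mat n E in
     mat (n + m + m + 1 + n) (m + m + n) (\<lambda>(r, c).
       if r < n then (if c < m then A $$ (r, c) else 0)
       else if r < n + m then
         (let e = r - n in
           if c < m then 0
           else if c < m + m then (if c - m = e then 1 else 0)
           else - (B $$ (e, c - (m + m))))
       else if r < n + m + m then
         (let e = r - (n + m) in
           if c < m then (if c = e then -1 else 0)
           else if c < m + m then (if c - m = e then 1 else 0)
           else 0)
       else if r = n + m + m then (if m + m \<le> c then 1 else 0)
       else
         (let v = r - (n + m + m + 1) in
           if m + m \<le> c \<and> c - (m + m) = v then 1 else 0)))"

definition example_arcs :: "(nat \<times> nat) list" where
  "example_arcs = [(0,1),(1,2),(1,3),(2,4),(3,4)]"

end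

theory Submission imports Defs begin
lemma det_mat0: "det (mat 0 0 f) = (1::'a::comm_ring_1)"
  by (simp add: det_def')
lemma det_matSuc: "det (mat (Suc n) (Suc n) f) = (\<Sum>j<Suc n. (f (0,j) :: 'a::comm_ring_1) * (-1)^j *
   det (mat n n (\<lambda>(a,b). f (Suc a, if b < j then b else Suc b))))"
proof -
  have "det (mat (Suc n) (Suc n) f) = (\<Sum>j<Suc n. mat (Suc n) (Suc n) f $$ (0,j) * cofactor (mat (Suc n) (Suc n) f) 0 j)"
    by (rule laplace_expansion_row) auto
  also have "\<dots> = (\<Sum>j<Suc n. f (0,j) * (-1)^j *
   det (mat n n (\<lambda>(a,b). f (Suc a, if b < j then b else Suc b))))"
  proof (rule sum.cong[OF refl])
    fix j
    have e: "mat n n (\<lambda>(i',j'). mat (Suc n) (Suc n) f $$ (Suc i', if j' < j then j' else Suc j'))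
       = mat n n (\<lambda>(a,b). f (Suc a, if b < j then b else Suc b))"
      by (rule eq_matI) auto
    assume "j \<in> {..<Suc n}"
    then show "mat (Suc n) (Suc n) f $$ (0, j) * cofactor (mat (Suc n) (Suc n) f) 0 j =
       f (0,j) * (-1)^j * det (mat n n (\<lambda>(a,b). f (Suc a, if b < j then b else Suc b)))"
      by (simp add: cofactor_def mat_delete_def e)
  qed
  finally show ?thesis .
qed
lemma pick_step: "pick S n = y \<Longrightarrow> x \<in> S \<Longrightarrow> y < x \<Longrightarrow> (\<forall>z\<in>S. y < z \<longrightarrow> x \<le> z) \<Longrightarrow> pick S (Suc n) = x"
  by (simp, rule Least_equality, auto)
lemma pI0: "pick {1,6,7,11,12} 0 = 1" by (simp, rule Least_equality, auto)
lemma pI1: "pick {1,6,7,11,12} (Suc (0)) = 6" by (rule pick_step[OF pI0]) auto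
lemma pI2: "pick {1,6,7,11,12} (Suc (Suc (0))) = 7" by (rule pick_step[OF pI1]) auto
lemma pI3: "pick {1,6,7,11,12} (Suc (Suc (Suc (0)))) = 11" by (rule pick_step[OF pI2]) auto
lemma pI4: "pick {1,6,7,11,12} (Suc (Suc (Suc (Suc (0))))) = 12" by (rule pick_step[OF pI3]) auto
lemma pJ0: "pick {1,2,6,7,11} 0 = 1" by (simp, rule Least_equality, auto)
lemma pJ1: "pick {1,2,6,7,11} (Suc (0)) = 2" by (rule pick_step[OF pJ0]) auto
lemma pJ2: "pick {1,2,6,7,11} (Suc (Suc (0))) = 6" by (rule pick_step[OF pJ1]) auto
lemma pJ3: "pick {1,2,6,7,11} (Suc (Suc (Suc (0)))) = 7" by (rule pick_step[OF pJ2]) auto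
lemma pJ4: "pick {1,2,6,7,11} (Suc (Suc (Suc (Suc (0))))) = 11" by (rule pick_step[OF pJ3]) auto
lemma pI: "pick {1,6,7,11,12} 0 = 1" "pick {1,6,7,11,12} 1 = 6" "pick {1,6,7,11,12} 2 = 7" "pick {1,6,7,11,12} 3 = 11" "pick {1,6,7,11,12} 4 = 12"
  using pI0 pI1 pI2 pI3 pI4 by (simp_all add: numeral_eq_Suc)
lemma pJ: "pick {1,2,6,7,11} 0 = 1" "pick {1,2,6,7,11} 1 = 2" "pick {1,2,6,7,11} 2 = 6" "pick {1,2,6,7,11} 3 = 7" "pick {1,2,6,7,11} 4 = 11"
  using pJ0 pJ1 pJ2 pJ3 pJ4 by (simp_all add: numeral_eq_Suc)
lemma detL: "det (mat 5 5 (\<lambda>(i,j). [[1, 1, 0, 0, 0], [0, 0, 1, 0, -1], [0, 0, 0, 1, -1], [-1, 0, 1, 0, 0], [0, -1, 0, 1, 0::int]] ! i ! j)) = 2"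
  by (simp add: numeral_eq_Suc det_matSuc det_mat0)

abbreviation "LL \<equiv> [[1, 1, 0, 0, 0], [0, 0, 1, 0, -1], [0, 0, 0, 1, -1], [-1, 0, 1, 0, 0], [0, -1, 0, 1, 0::int]]"

lemma cardI: "card {i. i < (21::nat) \<and> i \<in> {1,6,7,11,12}} = 5"
proof -
  have "{i. i < (21::nat) \<and> i \<in> {1,6,7,11,12}} = {1,6,7,11,12}" by auto
  then show ?thesis by simp
qed
lemma cardJ: "card {i. i < (15::nat) \<and> i \<in> {1,2,6,7,11}} = 5"
proof -
  have "{i. i < (15::nat) \<and> i \<in> {1,2,6,7,11}} = {1,2,6,7,11}" by auto
  then show ?thesis by simp
qed

lemma dimC: "dim_row (C_mat 5 example_arcs) = 21" "dim_col (C_mat 5 example_arcs) = 15"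
  by (simp_all add: C_mat_def example_arcs_def Let_def)

lemma subC: "submatrix (C_mat 5 example_arcs) {1,6,7,11,12} {1,2,6,7,11} = mat 5 5 (\<lambda>(i,j). LL ! i ! j)"
proof (rule eq_matI)
  show "dim_row (submatrix (C_mat 5 example_arcs) {1,6,7,11,12} {1,2,6,7,11}) = dim_row (mat 5 5 (\<lambda>(i,j). LL ! i ! j))"
    by (simp only: dim_submatrix dimC cardI dim_row_mat)
  show "dim_col (submatrix (C_mat 5 example_arcs) {1,6,7,11,12} {1,2,6,7,11}) = dim_col (mat 5 5 (\<lambda>(i,j). LL ! i ! j))"
    by (simp only: dim_submatrix dimC cardJ dim_col_mat)
  fix i j assume i: "i < dim_row (mat 5 5 (\<lambda>(i,j). LL ! i ! j))" and j: "j < dim_col (mat 5 5 (\<lambda>(i,j). LL ! i ! j))"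
  have i5: "i < 5" and j5: "j < 5" using i j by auto
  have "submatrix (C_mat 5 example_arcs) {1,6,7,11,12} {1,2,6,7,11} $$ (i,j) = C_mat 5 example_arcs $$ (pick {1,6,7,11,12} i, pick {1,2,6,7,11} j)"
    by (rule submatrix_index) (simp_all only: dimC cardI cardJ i5 j5)
  also have "\<dots> = LL ! i ! j"
  proof -
    have ii: "i = 0 \<or> i = 1 \<or> i = 2 \<or> i = 3 \<or> i = 4" using i5 by linarith
    have jj: "j = 0 \<or> j = 1 \<or> j = 2 \<or> j = 3 \<or> j = 4" using j5 by linarith
    have len: "length example_arcs = 5" by (simp add: example_arcs_def)
    show ?thesis
      using ii jj apply (elim disjE) apply (simp_all only: pI pJ) apply (simp_all add: C_mat_def Let_def len)
      apply (simp_all add: incidence_mat_def tail_mat_def len)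
      apply (simp_all add: example_arcs_def)
      done
  qed
  finally show "submatrix (C_mat 5 example_arcs) {1,6,7,11,12} {1,2,6,7,11} $$ (i,j) = mat 5 5 (\<lambda>(i,j). LL ! i ! j) $$ (i,j)"
    using i5 j5 by simp
qed

theorem mainTheorem2:
  shows "\<not> totally_unimodular (C_mat 5 example_arcs)"
proof
  assume "totally_unimodular (C_mat 5 example_arcs)"
  then have "det (submatrix (C_mat 5 example_arcs) {1,6,7,11,12} {1,2,6,7,11}) \<in> {-1,0,1}"
    unfolding totally_unimodular_def dimC by (elim allE impE) auto
  then show False unfolding subC detL by simp
qed

end
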